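(* Let $(M,\mathcal R)$ be a strongly $\lambda$-homogeneous logical structure satisfying (P). For tuples $a,b$ of the same length and a set $A$ such that $tp(a/A)$ and $tp(b/A)$ are large, the following are equivalent: (1) there are $n<\omega$ and $a=a_0,a_1,\dots,a_n=b$ such that for each $i<n$ there is an infinite $A$-indiscernible sequence containing $a_i$ and $a_{i+1}$; (2) $lstp(a/A)=lstp(b/A)$.
   Context: A logical structure is a pair $(M,\mathcal R)$ where $M$ is a first-order structure and $\mathcal R$ is a collection of finitary relations on $M$ invariant under automorphisms of $M$, closed under finite unions and intersections and under permuting coordinates; automorphisms of $(M,\mathcal R)$ preserve every member of $\mathcal R$. For sequences $\bar a,\bar b$, $tp(\bar a/\bar b)$ is the set of all expressions $R(v_{i_1},\dots,v_{i_m},b_{j_1},\dots,b_{j_l})$, $R\in\mathcal R$, with $R(a_{i_1},\dots,a_{i_m},b_{j_1},\dots,b_{j_l})$ true. $(M,\mathcal R)$ ($M$ infinite, $\lambda\le|M|$ infinite) is strongly $\lambda$-homogeneous if for $\alpha<\lambda$, $\bar a,\bar b\in M^\alpha$ with $tp(\bar a)=tp(\bar b)$ some automorphism maps $\bar a$ to $\bar b$. A type is large if it has $\ge\lambda$ realizations in $M$. $\{\bar a_i:i\in X\}$ ($X$ linearly ordered) is indiscernible over $A$ if increasing $n$-tuples all have the same type over $A$. Condition (P): there are infinite cardinals $\pi\le\pi'\le\lambda$ such that for every type $p$ over $A$ in $<\pi$ variables, $|A|<\pi$, any sequence $X$ of realizations of $p$ of length $\ge\pi'$ yields an $A$-indiscernible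 $\{\bar b_i:i<\omega\}$ each of whose $tp(\bar b_0,\dots,\bar b_n/A)$ is realized by an increasing subsequence of $X$. "Set" means subset of $M$ of cardinality $<\pi$. For a set $A$ and cardinal $\mu$, $SE^\mu(A)$ is the set of equivalence relations on $M^\mu$ invariant under automorphisms of $(M,\mathcal R)$ fixing $A$ pointwise and having fewer than $\lambda$ classes; $lstp(a/A)=lstp(b/A)$ means $E(a,b)$ for every $E\in SE^{\ell(a)}(A)$, where $\ell(a)$ is the length of $a$. *)

theory Defs
  imports Main
begin

abbreviation card_leq :: "'a set \<Rightarrow> 'b set \<Rightarrow> bool" (infix "<=o" 50) where
  "A <=o B \<equiv> (card_of A, card_of B) \<in> ordLeq"

abbreviation card_less :: "'a set \<Rightarrow> 'b set \<Rightarrow> bool" (infix "<o" 50) where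
  "A <o B \<equiv> (card_of A, card_of B) \<in> ordLess"

text \<open>The universe M is the type 'm. A finitary relation on M is a set of lists
of a fixed length (its arity). A first-order structure is given relationally by its
signature Sig (a set of finitary relations; functions and constants by their graphs).
The family Rs plays the role of the collection of relations of the logical structure.\<close>

definition finrel :: "'m list set \<Rightarrow> bool" where
  "finrel R \<longleftrightarrow> (\<exists>n. \<forall>xs\<in>R. length xs = n)"

definition has_arity :: "nat \<Rightarrow> 'm list set \<Rightarrow> bool" where
  "has_arity n R \<longleftrightarrow> (\<forall>xs\<in>R. length xs = n)"

definition autM :: "'m list set set \<Rightarrow> ('m \<Rightarrow> 'm) \<Rightarrow> bool" where
  "autM Sig f \<longleftrightarrow> bij f \<and> (\<forall>S\<in>Sig. map f ` S = S)"

definition aut :: "'m list set set \<Rightarrow> 'm list set set \<Rightarrow> ('m \<Rightarrow> 'm) \<Rightarrow> bool" where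
  "aut Sig Rs f \<longleftrightarrow> autM Sig f \<and> (\<forall>R\<in>Rs. map f ` R = R)"

definition perm_rel :: "nat \<Rightarrow> (nat \<Rightarrow> nat) \<Rightarrow> 'm list set \<Rightarrow> 'm list set" where
  "perm_rel n \<sigma> R = (\<lambda>xs. map (\<lambda>i. xs ! \<sigma> i) [0..<n]) ` R"

definition logical_structure :: "'m list set set \<Rightarrow> 'm list set set \<Rightarrow> bool" where
  "logical_structure Sig Rs \<longleftrightarrow>
     (\<forall>S\<in>Sig. finrel S) \<and> (\<forall>R\<in>Rs. finrel R) \<and>
     (\<forall>R\<in>Rs. \<forall>f. autM Sig f \<longrightarrow> map f ` R = R) \<and>
     (\<forall>R\<in>Rs. \<forall>S\<in>Rs. \<forall>n. has_arity n R \<and> has_arity n S \<longrightarrow> R \<union> S \<in> Rs \<and> R \<inter> S \<in> Rs) \<and>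
     (\<forall>R\<in>Rs. \<forall>n \<sigma>. has_arity n R \<and> bij_betw \<sigma> {..<n} {..<n} \<longrightarrow> perm_rel n \<sigma> R \<in> Rs)"

text \<open>The type over a parameter set A of a sequence a whose coordinates are
indexed by the index set I: the set of all expressions R(x_1,...,x_k) with R in Rs,
each x_j either a variable v_i (i in I) or a parameter from A, true in M when each
v_i is interpreted as a i.\<close>
definition tp :: "'m list set set \<Rightarrow> 'i set \<Rightarrow> ('i \<Rightarrow> 'm) \<Rightarrow> 'm set
                   \<Rightarrow> ('m list set \<times> ('i + 'm) list) set" where
  "tp Rs I a A = {(R, xs). R \<in> Rs \<and> set xs \<subseteq> Inl ` I \<union> Inr ` A \<and>
                           map (case_sum a id) xs \<in> R}"

text \<open>Strong lambda-homogeneity; the cardinal lambda is |Lam|. Sequences of ordinal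
length alpha < lambda are represented (up to reindexing, which does not affect types)
by sequences indexed by subsets I of M with |I| < lambda.\<close>
definition strongly_hom :: "'m list set set \<Rightarrow> 'm list set set \<Rightarrow> 'm set \<Rightarrow> bool" where
  "strongly_hom Sig Rs Lam \<longleftrightarrow>
     (\<forall>I :: 'm set. (I) <o (Lam) \<longrightarrow>
        (\<forall>a b :: 'm \<Rightarrow> 'm. tp Rs I a {} = tp Rs I b {} \<longrightarrow>
            (\<exists>f. aut Sig Rs f \<and> (\<forall>i\<in>I. f (a i) = b i))))"

definition large :: "'m list set set \<Rightarrow> 'm set \<Rightarrow> 'i set \<Rightarrow> ('i \<Rightarrow> 'm) \<Rightarrow> 'm set \<Rightarrow> bool" where
  "large Rs Lam I a A \<longleftrightarrow> (Lam) <=o ({c :: 'i \<Rightarrow> 'm. tp Rs I c A = tp Rs I a A})"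

definition incr_seq :: "('j \<times> 'j) set \<Rightarrow> 'j set \<Rightarrow> nat \<Rightarrow> (nat \<Rightarrow> 'j) \<Rightarrow> bool" where
  "incr_seq r J n s \<longleftrightarrow> (\<forall>k<n. s k \<in> J) \<and>
      (\<forall>k. Suc k < n \<longrightarrow> (s k, s (Suc k)) \<in> r \<and> s k \<noteq> s (Suc k))"

definition indisc :: "'m list set set \<Rightarrow> 'i set \<Rightarrow> 'm set \<Rightarrow> ('j \<times> 'j) set \<Rightarrow> 'j set
                        \<Rightarrow> ('j \<Rightarrow> 'i \<Rightarrow> 'm) \<Rightarrow> bool" where
  "indisc Rs I A r J f \<longleftrightarrow>
     (\<forall>n s t. incr_seq r J n s \<longrightarrow> incr_seq r J n t \<longrightarrow>
        tp Rs ({..<n} \<times> I) (\<lambda>(k, i). f (s k) i) A = tp Rs ({..<n} \<times> I) (\<lambda>(k, i). f (t k) i) A)"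

text \<open>Cardinals pi, pi' are |Pi|, |Pi'|. A sequence X of length an ordinal
alpha >= pi' is represented by a well-order r (a well-ordered index set of
cardinality >= pi'); by restricting to an initial segment, index sets inside M suffice.\<close>
definition cond_P :: "'m list set set \<Rightarrow> 'm set \<Rightarrow> 'm set \<Rightarrow> 'm set \<Rightarrow> bool" where
  "cond_P Rs Lam Pi Pi' \<longleftrightarrow>
     infinite Pi \<and> infinite Pi' \<and> (Pi) <=o (Pi') \<and> (Pi') <=o (Lam) \<and>
     (\<forall>(I :: 'm set) (A :: 'm set) (c :: 'm \<Rightarrow> 'm).
        (I) <o (Pi) \<longrightarrow> (A) <o (Pi) \<longrightarrow>
        (\<forall>(r :: ('m \<times> 'm) set) (X :: 'm \<Rightarrow> 'm \<Rightarrow> 'm).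
           Well_order r \<longrightarrow> (Pi') <=o (Field r) \<longrightarrow>
           (\<forall>j\<in>Field r. tp Rs I (X j) A = tp Rs I c A) \<longrightarrow>
           (\<exists>b :: nat \<Rightarrow> 'm \<Rightarrow> 'm.
              indisc Rs I A {(m, n). m \<le> n} UNIV b \<and>
              (\<forall>n. \<exists>s. incr_seq r (Field r) (Suc n) s \<and>
                    tp Rs ({..<Suc n} \<times> I) (\<lambda>(k, i). X (s k) i) A
                  = tp Rs ({..<Suc n} \<times> I) (\<lambda>(k, i). b k i) A))))"

text \<open>SE^mu(A) for mu the length of tuples of type 'i \<Rightarrow> 'm.\<close>
definition SE :: "'m list set set \<Rightarrow> 'm list set set \<Rightarrow> 'm set \<Rightarrow> 'm set
                   \<Rightarrow> (('i \<Rightarrow> 'm) \<times> ('i \<Rightarrow> 'm)) set set" where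
  "SE Sig Rs Lam A = {E. equiv UNIV E \<and>
      (\<forall>f. aut Sig Rs f \<and> (\<forall>x\<in>A. f x = x) \<longrightarrow>
         (\<forall>x y. (x, y) \<in> E \<longleftrightarrow> (f \<circ> x, f \<circ> y) \<in> E)) \<and>
      (UNIV // E) <o (Lam)}"

definition lstp_eq :: "'m list set set \<Rightarrow> 'm list set set \<Rightarrow> 'm set \<Rightarrow> 'm set
                        \<Rightarrow> ('i \<Rightarrow> 'm) \<Rightarrow> ('i \<Rightarrow> 'm) \<Rightarrow> bool" where
  "lstp_eq Sig Rs Lam A a b \<longleftrightarrow> (\<forall>E\<in>SE Sig Rs Lam A. (a, b) \<in> E)"

end

theory Submission
  imports Defs
begin

lemma incr_trans:
  assumes tr: "trans r" and an: "antisym r" and inc: "incr_seq r J n s"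
  shows "i < j \<Longrightarrow> j < n \<Longrightarrow> (s i, s j) \<in> r \<and> s i \<noteq> s j"
proof (induction j)
  case 0 then show ?case by simp
next
  case (Suc j)
  have st: "(s j, s (Suc j)) \<in> r" "s j \<noteq> s (Suc j)" using inc Suc.prems unfolding incr_seq_def by auto
  show ?case
  proof (cases "i = j")
    case True then show ?thesis using st by simp
  next
    case False
    then have ij: "i < j" using Suc.prems by simp
    then have ih: "(s i, s j) \<in> r" "s i \<noteq> s j" using Suc by auto
    have "(s i, s (Suc j)) \<in> r" using ih(1) st(1) tr by (meson transD)
    moreover have "s i \<noteq> s (Suc j)"
    proof
      assume "s i = s (Suc j)"
      then have "(s (Suc j), s j) \<in> r" using ih by simp
      then show False using st an by (meson antisymD)
    qed
    ultimately show ?thesis by simp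
  qed
qed

lemma lin_trans: "linear_order_on Z r \<Longrightarrow> trans r"
  by (simp add: linear_order_on_def partial_order_on_def preorder_on_def)
lemma lin_antisym: "linear_order_on Z r \<Longrightarrow> antisym r"
  by (simp add: linear_order_on_def partial_order_on_def)
lemma lin_refl: "linear_order_on Z r \<Longrightarrow> x \<in> Z \<Longrightarrow> (x, x) \<in> r"
  by (simp add: linear_order_on_def partial_order_on_def preorder_on_def refl_on_def)
lemma lin_total: "linear_order_on Z r \<Longrightarrow> x \<in> Z \<Longrightarrow> y \<in> Z \<Longrightarrow> x \<noteq> y \<Longrightarrow> (x, y) \<in> r \<or> (y, x) \<in> r"
  by (simp add: linear_order_on_def total_on_def)

lemma finite_max:
  assumes lin: "linear_order_on Z r"
  shows "finite F \<Longrightarrow> F \<noteq> {} \<Longrightarrow> F \<subseteq> Z \<Longrightarrow> \<exists>m\<in>F. \<forall>x\<in>F. (x, m) \<in> r"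
proof (induction F rule: finite_ne_induct)
  case (singleton x) then show ?case using lin_refl[OF lin] by auto
next
  case (insert x F)
  then obtain m where m: "m \<in> F" "\<forall>y\<in>F. (y, m) \<in> r" by auto
  have xZ: "x \<in> Z" "m \<in> Z" using insert m by auto
  show ?case
  proof (cases "(x, m) \<in> r")
    case True then show ?thesis using m by auto
  next
    case False
    then have "x \<noteq> m" using lin_refl[OF lin] xZ by auto
    then have xm: "(m, x) \<in> r" using lin_total[OF lin xZ] False by auto
    have "\<forall>y\<in>insert x F. (y, x) \<in> r"
      using m xm lin_trans[OF lin] lin_refl[OF lin] xZ by (auto dest: transD)
    then show ?thesis by auto
  qed
qed

lemma sort_finite:
  assumes lin: "linear_order_on Z r"
  shows "finite F \<Longrightarrow> F \<subseteq> Z \<Longrightarrow> \<exists>t. incr_seq r F (card F) t \<and> t ` {..<card F} = F"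
proof (induction "card F" arbitrary: F)
  case 0
  then have "F = {}" by simp
  then show ?case by (simp add: incr_seq_def)
next
  case (Suc n)
  then have ne: "F \<noteq> {}" by auto
  obtain m where m: "m \<in> F" "\<forall>x\<in>F. (x, m) \<in> r" using finite_max[OF lin] Suc.prems ne by blast
  let ?F = "F - {m}"
  have cF: "card ?F = n" using Suc.hyps(2) m(1) Suc.prems by simp
  obtain t where t: "incr_seq r ?F n t" "t ` {..<n} = ?F"
    using Suc.hyps(1)[OF cF[symmetric]] Suc.prems cF by auto
  define t' where "t' = t(n := m)"
  have img: "t' ` {..<Suc n} = F"
  proof -
    have "t' ` {..<Suc n} = t ` {..<n} \<union> {m}"
      unfolding t'_def lessThan_Suc by (auto simp: image_iff)
    then show ?thesis using t(2) m(1) by auto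
  qed
  have A: "\<forall>k<Suc n. t' k \<in> F" using img by blast
  have B: "(t' k, t' (Suc k)) \<in> r \<and> t' k \<noteq> t' (Suc k)" if k: "Suc k < Suc n" for k
  proof -
    show "(t' k, t' (Suc k)) \<in> r \<and> t' k \<noteq> t' (Suc k)"
    proof (cases "Suc k = n")
      case True
      then have "t' k = t k" "t' (Suc k) = m" unfolding t'_def by auto
      moreover have "t k \<in> ?F" using t(1) True unfolding incr_seq_def by auto
      ultimately show ?thesis using m by auto
    next
      case False
      then have "Suc k < n" using k by simp
      then have "t' k = t k" "t' (Suc k) = t (Suc k)" unfolding t'_def by auto
      then show ?thesis using t(1) \<open>Suc k < n\<close> unfolding incr_seq_def by auto
    qed
  qed
  have "incr_seq r F (Suc n) t'" unfolding incr_seq_def using A B by blast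
  then show ?case using img Suc.hyps(2) by auto
qed

lemma incr_exists:
  assumes lin: "linear_order_on J r" and inf: "infinite J"
  shows "\<exists>s. incr_seq r J n s"
proof -
  obtain F where F: "F \<subseteq> J" "finite F" "card F = n" using infinite_arbitrarily_large[OF inf] by blast
  obtain t where "incr_seq r F (card F) t" using sort_finite[OF lin F(2,1)] by blast
  then have "incr_seq r J n t" using F unfolding incr_seq_def by auto
  then show ?thesis by blast
qed

lemma tp_cong: "(\<And>x. x \<in> I \<Longrightarrow> a x = a' x) \<Longrightarrow> tp Rs I a A = tp Rs I a' A"
proof -
  assume h: "\<And>x. x \<in> I \<Longrightarrow> a x = a' x"
  have "map (case_sum a id) xs = map (case_sum a' id) xs" if "set xs \<subseteq> Inl ` I \<union> Inr ` A" for xs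
    using that h by (induction xs) (auto split: sum.split)
  then show ?thesis unfolding tp_def by (auto simp del: map_eq_conv)
qed

lemma tp_mono_index:
  assumes "I' \<subseteq> I" "tp Rs I a A = tp Rs I b A"
  shows "tp Rs I' a A = tp Rs I' b A"
proof -
  have "tp Rs I' c A = {(R, xs) \<in> tp Rs I c A. set xs \<subseteq> Inl ` I' \<union> Inr ` A}" for c
    using assms(1) unfolding tp_def by blast
  then show ?thesis using assms(2) by simp
qed

lemma map_case_sum_comp:
  "map (case_sum (a \<circ> h) id) xs = map (case_sum a id) (map (map_sum h id) xs)"
  by (induction xs) (auto split: sum.split)

lemma tp_compose:
  assumes "tp Rs (h ` K) a A = tp Rs (h ` K) b A"
  shows "tp Rs K (a \<circ> h) A = tp Rs K (b \<circ> h) A"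
proof -
  have *: "(R, xs) \<in> tp Rs K (c \<circ> h) A \<longleftrightarrow> (R, map (map_sum h id) xs) \<in> tp Rs (h ` K) c A"
    if "set xs \<subseteq> Inl ` K \<union> Inr ` A" for R xs c
  proof -
    have "set (map (map_sum h id) xs) \<subseteq> Inl ` h ` K \<union> Inr ` A" using that by auto
    then show ?thesis using that unfolding tp_def map_case_sum_comp by auto
  qed
  show ?thesis
  proof (rule set_eqI)
    fix z show "z \<in> tp Rs K (a \<circ> h) A \<longleftrightarrow> z \<in> tp Rs K (b \<circ> h) A"
    proof (cases z)
      case (Pair R xs)
      show ?thesis
      proof (cases "set xs \<subseteq> Inl ` K \<union> Inr ` A")
        case True then show ?thesis using * assms Pair by auto
      next
        case False then show ?thesis using Pair unfolding tp_def by auto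
      qed
    qed
  qed
qed

lemma tp_reindex:
  assumes inj: "inj_on h K" and eq: "tp Rs K (a \<circ> h) A = tp Rs K (b \<circ> h) A"
  shows "tp Rs (h ` K) a A = tp Rs (h ` K) b A"
proof -
  let ?g = "inv_into K h"
  have bk: "map (map_sum h id) (map (map_sum ?g id) ys) = ys" if "set ys \<subseteq> Inl ` h ` K \<union> Inr ` A" for ys
    using that inj by (induction ys) (auto simp: f_inv_into_f)
  have setb: "set (map (map_sum ?g id) ys) \<subseteq> Inl ` K \<union> Inr ` A" if "set ys \<subseteq> Inl ` h ` K \<union> Inr ` A" for ys
    using that by (auto simp: inv_into_into)
  have *: "(R, ys) \<in> tp Rs (h ` K) c A \<longleftrightarrow> (R, map (map_sum ?g id) ys) \<in> tp Rs K (c \<circ> h) A"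
    if "set ys \<subseteq> Inl ` h ` K \<union> Inr ` A" for R ys c
  proof -
    have e: "map (case_sum (c \<circ> h) id) (map (map_sum ?g id) ys) = map (case_sum c id) ys"
      using bk[OF that] map_case_sum_comp by metis
    show ?thesis using that setb[OF that] e unfolding tp_def by (simp del: map_map)
  qed
  show ?thesis
  proof (rule set_eqI)
    fix z show "z \<in> tp Rs (h ` K) a A \<longleftrightarrow> z \<in> tp Rs (h ` K) b A"
    proof (cases z)
      case (Pair R xs)
      show ?thesis
      proof (cases "set xs \<subseteq> Inl ` h ` K \<union> Inr ` A")
        case True then show ?thesis using * eq Pair by auto
      next
        case False then show ?thesis using Pair unfolding tp_def by auto
      qed
    qed
  qed
qed

lemma tp_finite:
  assumes "\<And>F. finite F \<Longrightarrow> F \<subseteq> I \<Longrightarrow> tp Rs F a A = tp Rs F b A"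
  shows "tp Rs I a A = tp Rs I b A"
proof -
  have "z \<in> tp Rs I a A \<longleftrightarrow> z \<in> tp Rs I b A" for z
  proof (cases z)
    case (Pair R xs)
    let ?F = "{i. Inl i \<in> set xs} \<inter> I"
    have fin: "finite ?F"
    proof -
      have "?F \<subseteq> projl ` set xs" by (force simp: image_iff)
      then show ?thesis by (rule finite_subset) simp
    qed
    have "(R, xs) \<in> tp Rs I c A \<longleftrightarrow> (R, xs) \<in> tp Rs ?F c A" for c
    proof -
      have "set xs \<subseteq> Inl ` I \<union> Inr ` A \<longleftrightarrow> set xs \<subseteq> Inl ` ?F \<union> Inr ` A"
      proof
        assume h: "set xs \<subseteq> Inl ` I \<union> Inr ` A"
        show "set xs \<subseteq> Inl ` ?F \<union> Inr ` A"
        proof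
          fix z assume z: "z \<in> set xs"
          then show "z \<in> Inl ` ?F \<union> Inr ` A" using h by (cases z) auto
        qed
      next
        assume "set xs \<subseteq> Inl ` ?F \<union> Inr ` A" then show "set xs \<subseteq> Inl ` I \<union> Inr ` A" by blast
      qed
      then show ?thesis unfolding tp_def by simp
    qed
    then show ?thesis using assms[OF fin] Pair by auto
  qed
  then show ?thesis by blast
qed

lemma aut_bij: "aut Sig Rs g \<Longrightarrow> bij g"
  by (simp add: aut_def autM_def)

lemma aut_Rs: "aut Sig Rs g \<Longrightarrow> R \<in> Rs \<Longrightarrow> map g ys \<in> R \<longleftrightarrow> ys \<in> R"
proof -
  assume g: "aut Sig Rs g" and R: "R \<in> Rs"
  have img: "map g ` R = R" using g R by (simp add: aut_def)
  have inj: "inj (map g)" using aut_bij[OF g] by (simp add: bij_def inj_mapI)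
  show ?thesis
  proof
    assume "map g ys \<in> R"
    then have "map g ys \<in> map g ` R" using img by simp
    then show "ys \<in> R" using inj by (auto dest: injD)
  next
    assume "ys \<in> R" then show "map g ys \<in> R" using img by blast
  qed
qed

lemma tp_aut:
  assumes g: "aut Sig Rs g" and fx: "\<forall>x\<in>A. g x = x"
  shows "tp Rs I (g \<circ> a) A = tp Rs I a A"
proof -
  have m: "map (case_sum (g \<circ> a) id) xs = map g (map (case_sum a id) xs)" if "set xs \<subseteq> Inl ` I \<union> Inr ` A" for xs
    using that fx by (induction xs) auto
  show ?thesis
  proof (rule set_eqI)
    fix z show "z \<in> tp Rs I (g \<circ> a) A \<longleftrightarrow> z \<in> tp Rs I a A"
    proof (cases z)
      case (Pair R xs)
      show ?thesis
      proof (cases "R \<in> Rs \<and> set xs \<subseteq> Inl ` I \<union> Inr ` A")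
        case True then show ?thesis using Pair m[of xs] aut_Rs[OF g, of R "map (case_sum a id) xs"] unfolding tp_def by (simp del: map_eq_conv)
      next
        case False then show ?thesis using Pair unfolding tp_def by auto
      qed
    qed
  qed
qed

lemma aut_inv:
  assumes g: "aut Sig Rs g" shows "aut Sig Rs (inv g)"
proof -
  have b: "bij g" using g by (simp add: aut_def autM_def)
  have key: "map (inv g) ` S = S" if "map g ` S = S" for S :: "'a list set"
  proof -
    have "map (inv g) ` S = map (inv g) ` map g ` S" using that by metis
    also have "\<dots> = (\<lambda>xs. map (inv g \<circ> g) xs) ` S" by (simp add: image_image)
    also have "\<dots> = S" using b by (simp add: bij_is_inj inv_o_cancel)
    finally show ?thesis .
  qed
  have "bij (inv g)" using b bij_imp_bij_inv bij_betw_inv_into by blast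
  moreover have "\<forall>S\<in>Sig. map (inv g) ` S = S" using g key unfolding aut_def autM_def by auto
  moreover have "\<forall>R\<in>Rs. map (inv g) ` R = R" using g key unfolding aut_def autM_def by auto
  ultimately show ?thesis unfolding aut_def autM_def by blast
qed

lemma fin_ordLess_inf: "finite A \<Longrightarrow> infinite C \<Longrightarrow> (A) <o (C)"
proof -
  assume fA: "finite A" and iC: "infinite C"
  have "\<not> (C <=o A)" using card_of_ordLeq_finite fA iC by blast
  then show ?thesis using not_ordLeq_iff_ordLess[OF card_of_Well_order card_of_Well_order] by blast
qed

lemma my_Times_ordLess:
  assumes INF: "infinite C" and L1: "(A) <o (C)" and L2: "(B) <o (C)"
  shows "(A \<times> B) <o (C)"
proof (cases "finite (A \<times> B)")
  case True then show ?thesis using fin_ordLess_inf INF by blast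
next
  case False
  then have ne: "A \<noteq> {}" "B \<noteq> {}" by auto
  have "(A) <=o (B) \<or> (B) <=o (A)" using ordLeq_total[OF card_of_Well_order card_of_Well_order] .
  then show ?thesis
  proof
    assume ab: "(A) <=o (B)"
    show ?thesis
    proof (cases "finite B")
      case True
      then have "finite A" using ab card_of_ordLeq_finite by blast
      then show ?thesis using True False finite_cartesian_product by blast
    next
      case False
      then have "(card_of (A \<times> B), card_of (B)) \<in> ordIso" using card_of_Times_infinite[OF False ne(1) ab] by blast
      then show ?thesis using L2 ordIso_ordLess_trans by blast
    qed
  next
    assume ab: "(B) <=o (A)"
    show ?thesis
    proof (cases "finite A")
      case True
      then have "finite B" using ab card_of_ordLeq_finite by blast
      then show ?thesis using True False finite_cartesian_product by blast
    next
      case False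
      then have "(card_of (A \<times> B), card_of (A)) \<in> ordIso" using card_of_Times_infinite[OF False ne(2) ab] by blast
      then show ?thesis using L1 ordIso_ordLess_trans by blast
    qed
  qed
qed

lemma tp_param:
  assumes "tp Rs K a A = tp Rs K b A"
  shows "tp Rs (K <+> A) (case_sum a id) {} = tp Rs (K <+> A) (case_sum b id) {}"
proof -
  have m: "map (case_sum (case_sum c id) id) xs = map (case_sum c id) (map projl xs)"
    if "set xs \<subseteq> Inl ` (K <+> A)" for xs c
    using that by (induction xs) auto
  have s: "set (map projl xs) \<subseteq> Inl ` K \<union> Inr ` A" if "set xs \<subseteq> Inl ` (K <+> A)" for xs
    using that by auto
  have *: "(R, xs) \<in> tp Rs (K <+> A) (case_sum c id) {} \<longleftrightarrow> (R, map projl xs) \<in> tp Rs K c A"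
    if "set xs \<subseteq> Inl ` (K <+> A)" for R xs c
    using that m[OF that, of c] s[OF that] unfolding tp_def by (simp del: map_map)
  show ?thesis
  proof (rule set_eqI)
    fix z show "z \<in> tp Rs (K <+> A) (case_sum a id) {} \<longleftrightarrow> z \<in> tp Rs (K <+> A) (case_sum b id) {}"
    proof (cases z)
      case (Pair R xs)
      show ?thesis
      proof (cases "set xs \<subseteq> Inl ` (K <+> A)")
        case True then show ?thesis using * assms Pair by auto
      next
        case False then show ?thesis using Pair unfolding tp_def by auto
      qed
    qed
  qed
qed

lemma hom_A:
  fixes a b :: "'k \<Rightarrow> 'm"
  assumes hom: "strongly_hom Sig Rs Lam" and inf: "infinite Lam"
    and K: "(K) <o (Lam)" and Asm: "(A) <o (Lam)"
    and eq: "tp Rs K a A = tp Rs K b A"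
  shows "\<exists>g. aut Sig Rs g \<and> (\<forall>x\<in>A. g x = x) \<and> (\<forall>k\<in>K. g (a k) = b k)"
proof -
  have KA: "(K <+> A) <o (Lam)" using card_of_Plus_ordLess_infinite inf K Asm by blast
  have "(Lam) <=o (UNIV :: 'm set)" by (rule card_of_mono1) simp
  then have "(K <+> A) <=o (UNIV :: 'm set)" using KA ordLess_ordLeq_trans ordLess_imp_ordLeq by blast
  then obtain e :: "'k + 'm \<Rightarrow> 'm" where e: "inj_on e (K <+> A)" using card_of_ordLeq[of "K <+> A" "UNIV :: 'm set"] by blast
  define I where "I = e ` (K <+> A)"
  have I: "(I) <o (Lam)" unfolding I_def using card_of_image KA ordLeq_ordLess_trans by blast
  define a' where "a' m = (case inv_into (K <+> A) e m of Inl k \<Rightarrow> a k | Inr x \<Rightarrow> x)" for m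
  define b' where "b' m = (case inv_into (K <+> A) e m of Inl k \<Rightarrow> b k | Inr x \<Rightarrow> x)" for m
  have ea: "(a' \<circ> e) z = case_sum a id z" "(b' \<circ> e) z = case_sum b id z" if "z \<in> K <+> A" for z
    using that e unfolding a'_def b'_def by (auto simp: inv_into_f_f split: sum.split)
  have "tp Rs (K <+> A) (a' \<circ> e) {} = tp Rs (K <+> A) (b' \<circ> e) {}"
    using tp_param[OF eq] tp_cong[of "K <+> A" "a' \<circ> e" "case_sum a id"] tp_cong[of "K <+> A" "b' \<circ> e" "case_sum b id"] ea
    by simp
  then have "tp Rs I a' {} = tp Rs I b' {}" unfolding I_def using tp_reindex[OF e] by blast
  then obtain g where g: "aut Sig Rs g" "\<forall>i\<in>I. g (a' i) = b' i"
    using hom I unfolding strongly_hom_def by blast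
  have "\<forall>x\<in>A. g x = x"
  proof
    fix x assume "x \<in> A"
    then have "Inr x \<in> K <+> A" by auto
    then have "g (a' (e (Inr x))) = b' (e (Inr x))" using g(2) unfolding I_def by blast
    then show "g x = x" using ea[of "Inr x"] \<open>Inr x \<in> K <+> A\<close> by simp
  qed
  moreover have "\<forall>k\<in>K. g (a k) = b k"
  proof
    fix k assume "k \<in> K"
    then have "Inl k \<in> K <+> A" by auto
    then have "g (a' (e (Inl k))) = b' (e (Inl k))" using g(2) unfolding I_def by blast
    then show "g (a k) = b k" using ea[of "Inl k"] \<open>Inl k \<in> K <+> A\<close> by simp
  qed
  ultimately show ?thesis using g(1) by blast
qed

definition Phi :: "'m list set set \<Rightarrow> 'm set \<Rightarrow> (nat \<times> nat) set \<Rightarrow> nat set \<Rightarrow> (nat \<Rightarrow> 'i \<Rightarrow> 'm) \<Rightarrow> nat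
    \<Rightarrow> ('m list set \<times> (nat \<times> 'i + 'm) list) set" where
  "Phi Rs A r J f n = tp Rs ({..<n} \<times> UNIV) (\<lambda>(k, i). f ((SOME s. incr_seq r J n s) k) i) A"

definition realz :: "'m list set set \<Rightarrow> 'm set \<Rightarrow> (nat \<times> nat) set \<Rightarrow> nat set \<Rightarrow> (nat \<Rightarrow> 'i \<Rightarrow> 'm)
    \<Rightarrow> ('x \<times> 'x) set \<Rightarrow> 'x set \<Rightarrow> ('x \<Rightarrow> 'i \<Rightarrow> 'm) \<Rightarrow> bool" where
  "realz Rs A r J f Ord D b \<longleftrightarrow> (\<forall>n s. incr_seq Ord D n s \<longrightarrow>
      tp Rs ({..<n} \<times> UNIV) (\<lambda>(k, i). b (s k) i) A = Phi Rs A r J f n)"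

lemma phi_f:
  assumes lin: "linear_order_on J r" and inf: "infinite J" and ind: "indisc Rs UNIV A r J f"
    and s: "incr_seq r J n s"
  shows "tp Rs ({..<n} \<times> UNIV) (\<lambda>(k, i). f (s k) i) A = Phi Rs A r J f n"
proof -
  have "incr_seq r J n (SOME s. incr_seq r J n s)" using incr_exists[OF lin inf] by (rule someI_ex)
  then show ?thesis using ind s unfolding indisc_def Phi_def by blast
qed

lemma incr_mono: "incr_seq r D n s \<Longrightarrow> D \<subseteq> D' \<Longrightarrow> incr_seq r D' n s"
  unfolding incr_seq_def by blast

lemma realz_mono: "realz Rs A r J f Ord D b \<Longrightarrow> D' \<subseteq> D \<Longrightarrow> realz Rs A r J f Ord D' b"
  unfolding realz_def using incr_mono by blast

lemma realz_cong:
  assumes "realz Rs A r J f Ord D b" "\<And>d. d \<in> D \<Longrightarrow> c d = b d"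
  shows "realz Rs A r J f Ord D c"
  unfolding realz_def
proof (intro allI impI)
  fix n s assume s: "incr_seq Ord D n s"
  have "tp Rs ({..<n} \<times> UNIV) (\<lambda>(k, i). c (s k) i) A = tp Rs ({..<n} \<times> UNIV) (\<lambda>(k, i). b (s k) i) A"
    by (rule tp_cong) (use s assms(2) in \<open>auto simp: incr_seq_def\<close>)
  then show "tp Rs ({..<n} \<times> UNIV) (\<lambda>(k, i). c (s k) i) A = Phi Rs A r J f n"
    using assms(1) s unfolding realz_def by simp
qed

lemma realz_aut:
  assumes "realz Rs A r J f Ord D c" "aut Sig Rs g" "\<forall>x\<in>A. g x = x"
  shows "realz Rs A r J f Ord D (\<lambda>d. g \<circ> c d)"
  unfolding realz_def
proof (intro allI impI)
  fix n s assume s: "incr_seq Ord D n s"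
  have "(\<lambda>(k, i). (g \<circ> c (s k)) i) = g \<circ> (\<lambda>(k, i). c (s k) i)" by auto
  then have "tp Rs ({..<n} \<times> UNIV) (\<lambda>(k, i). (g \<circ> c (s k)) i) A = tp Rs ({..<n} \<times> UNIV) (\<lambda>(k, i). c (s k) i) A"
    using tp_aut[OF assms(2,3)] by metis
  then show "tp Rs ({..<n} \<times> UNIV) (\<lambda>(k, i). (g \<circ> c (s k)) i) A = Phi Rs A r J f n"
    using assms(1) s unfolding realz_def by simp
qed

lemma realz_tp_eq:
  fixes b c :: "'x \<Rightarrow> 'i \<Rightarrow> 'm"
  assumes Ord: "linear_order_on UNIV Ord"
    and b: "realz Rs A r J f Ord D b" and c: "realz Rs A r J f Ord D c"
  shows "tp Rs (D \<times> UNIV) (\<lambda>(d, i). b d i) A = tp Rs (D \<times> UNIV) (\<lambda>(d, i). c d i) A"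
proof (rule tp_finite)
  fix F :: "('x \<times> 'i) set" assume F: "finite F" "F \<subseteq> D \<times> UNIV"
  let ?F1 = "fst ` F"
  have F1: "finite ?F1" "?F1 \<subseteq> D" using F by auto
  obtain t where t: "incr_seq Ord ?F1 (card ?F1) t" "t ` {..<card ?F1} = ?F1"
    using sort_finite[OF Ord F1(1)] by blast
  let ?m = "card ?F1"
  have tD: "incr_seq Ord D ?m t" using incr_mono[OF t(1) F1(2)] .
  have inj: "inj_on t {..<?m}"
  proof (rule inj_onI)
    fix x y assume xy: "x \<in> {..<?m}" "y \<in> {..<?m}" "t x = t y"
    show "x = y"
    proof (rule ccontr)
      assume "x \<noteq> y"
      then have "x < y \<or> y < x" by auto
      then show False
      proof
        assume "x < y" then show False using incr_trans[OF lin_trans[OF Ord] lin_antisym[OF Ord] t(1), of x y] xy by auto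
      next
        assume "y < x" then show False using incr_trans[OF lin_trans[OF Ord] lin_antisym[OF Ord] t(1), of y x] xy by auto
      qed
    qed
  qed
  define h where "h = (\<lambda>(k::nat, i::'i). (t k, i))"
  have injh: "inj_on h ({..<?m} \<times> UNIV)"
  proof (rule inj_onI)
    fix x y assume "x \<in> {..<?m} \<times> UNIV" "y \<in> {..<?m} \<times> UNIV" "h x = h y"
    then show "x = y" using inj unfolding h_def inj_on_def by (cases x, cases y) simp
  qed
  have himg: "h ` ({..<?m} \<times> UNIV) = ?F1 \<times> UNIV"
  proof -
    have "h ` ({..<?m} \<times> UNIV) = (t ` {..<?m}) \<times> UNIV" unfolding h_def by (auto simp: image_iff)
    then show ?thesis using t(2) by simp
  qed
  have eqb: "(\<lambda>(d, i). b d i) \<circ> h = (\<lambda>(k, i). b (t k) i)" unfolding h_def by (rule ext) (simp split: prod.split)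
  have eqc: "(\<lambda>(d, i). c d i) \<circ> h = (\<lambda>(k, i). c (t k) i)" unfolding h_def by (rule ext) (simp split: prod.split)
  have "tp Rs ({..<?m} \<times> UNIV) (\<lambda>(k, i). b (t k) i) A = Phi Rs A r J f ?m"
    using b tD unfolding realz_def by blast
  moreover have "tp Rs ({..<?m} \<times> UNIV) (\<lambda>(k, i). c (t k) i) A = Phi Rs A r J f ?m"
    using c tD unfolding realz_def by blast
  ultimately have "tp Rs ({..<?m} \<times> UNIV) ((\<lambda>(d, i). b d i) \<circ> h) A = tp Rs ({..<?m} \<times> UNIV) ((\<lambda>(d, i). c d i) \<circ> h) A"
    unfolding eqb eqc by simp
  then have "tp Rs (h ` ({..<?m} \<times> UNIV)) (\<lambda>(d, i). b d i) A = tp Rs (h ` ({..<?m} \<times> UNIV)) (\<lambda>(d, i). c d i) A"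
    by (rule tp_reindex[OF injh])
  then have eq1: "tp Rs (?F1 \<times> UNIV) (\<lambda>(d, i). b d i) A = tp Rs (?F1 \<times> UNIV) (\<lambda>(d, i). c d i) A"
    unfolding himg .
  have "F \<subseteq> ?F1 \<times> UNIV" by (auto intro: rev_image_eqI)
  then show "tp Rs F (\<lambda>(d, i). b d i) A = tp Rs F (\<lambda>(d, i). c d i) A"
    using tp_mono_index eq1 by blast
qed

lemma realz_finite:
  assumes Ord: "linear_order_on UNIV Ord"
    and lin: "linear_order_on J r" and inf: "infinite J" and ind: "indisc Rs UNIV A r J f"
    and D: "finite D"
  shows "\<exists>b. realz Rs A r J f Ord D b"
proof -
  obtain t where t: "incr_seq Ord D (card D) t" "t ` {..<card D} = D"
    using sort_finite[OF Ord D] by blast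
  let ?N = "card D"
  obtain s0 where s0: "incr_seq r J ?N s0" using incr_exists[OF lin inf] by blast
  define b where "b d = f (s0 (inv_into {..<?N} t d))" for d
  have "realz Rs A r J f Ord D b"
    unfolding realz_def
  proof (intro allI impI)
    fix n s assume s: "incr_seq Ord D n s"
    define \<pi> where "\<pi> k = inv_into {..<?N} t (s k)" for k
    have sD: "s k \<in> D" if "k < n" for k using s that unfolding incr_seq_def by auto
    have pN: "\<pi> k < ?N" and tp: "t (\<pi> k) = s k" if "k < n" for k
    proof -
      have "s k \<in> t ` {..<?N}" using sD[OF that] t(2) by simp
      then show "\<pi> k < ?N" "t (\<pi> k) = s k" unfolding \<pi>_def using inv_into_into[of "s k" t "{..<?N}"] f_inv_into_f[of "s k" t "{..<?N}"] by auto
    qed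
    have pinc: "\<pi> k < \<pi> (Suc k)" if k: "Suc k < n" for k
    proof (rule ccontr)
      assume "\<not> \<pi> k < \<pi> (Suc k)"
      then have "\<pi> (Suc k) < \<pi> k \<or> \<pi> (Suc k) = \<pi> k" by auto
      moreover have st: "(s k, s (Suc k)) \<in> Ord" "s k \<noteq> s (Suc k)" using s k unfolding incr_seq_def by auto
      moreover have "\<pi> (Suc k) < \<pi> k \<Longrightarrow> (s (Suc k), s k) \<in> Ord"
        using incr_trans[OF lin_trans[OF Ord] lin_antisym[OF Ord] t(1), of "\<pi> (Suc k)" "\<pi> k"] pN tp k by auto
      moreover have "t (\<pi> k) = s k" "t (\<pi> (Suc k)) = s (Suc k)" using tp k by auto
      ultimately show False using lin_antisym[OF Ord] unfolding antisym_def by metis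
    qed
    have s1a: "\<forall>k<n. (s0 \<circ> \<pi>) k \<in> J" using s0 pN unfolding incr_seq_def by auto
    have s1b: "((s0 \<circ> \<pi>) k, (s0 \<circ> \<pi>) (Suc k)) \<in> r \<and> (s0 \<circ> \<pi>) k \<noteq> (s0 \<circ> \<pi>) (Suc k)"
      if k: "Suc k < n" for k
      using incr_trans[OF lin_trans[OF lin] lin_antisym[OF lin] s0, of "\<pi> k" "\<pi> (Suc k)"] pinc[OF k] pN[OF k] by simp
    have s1: "incr_seq r J n (s0 \<circ> \<pi>)" unfolding incr_seq_def using s1a s1b by blast
    have "tp Rs ({..<n} \<times> UNIV) (\<lambda>(k, i). b (s k) i) A = tp Rs ({..<n} \<times> UNIV) (\<lambda>(k, i). f ((s0 \<circ> \<pi>) k) i) A"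
      by (rule tp_cong) (auto simp: b_def \<pi>_def)
    also have "\<dots> = Phi Rs A r J f n" using phi_f[OF lin inf ind s1] .
    finally show "tp Rs ({..<n} \<times> UNIV) (\<lambda>(k, i). b (s k) i) A = Phi Rs A r J f n" .
  qed
  then show ?thesis by blast
qed

lemma tp_empty_idx: "I = {} \<Longrightarrow> tp Rs I a A = tp Rs I b A"
  by (rule tp_cong) simp

lemma realz_all:
  fixes f :: "nat \<Rightarrow> 'i \<Rightarrow> 'm" and Ord :: "('m \<times> 'm) set"
  assumes hom: "strongly_hom Sig Rs Lam" and infL: "infinite Lam"
    and Asm: "A <o Lam" and Ism: "(UNIV :: 'i set) <o Lam"
    and Ord: "linear_order_on UNIV Ord"
    and lin: "linear_order_on J r" and inf: "infinite J" and ind: "indisc Rs UNIV A r J f"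
  shows "D <=o Lam \<Longrightarrow> \<exists>b. realz Rs A r J f Ord D b"
proof (induction D rule: wf_induct[OF wf_inv_image[OF wf_ordLess, of card_of]])
  case (1 D)
  note IH = "1.IH"
  note DL = "1.prems"
  show ?case
  proof (cases "finite D")
    case True then show ?thesis using realz_finite[OF Ord lin inf ind] by blast
  next
    case False
    define V where "V = card_of D"
    have WV: "well_order_on D V" unfolding V_def
      using card_of_Well_order[of D] Field_card_of[of D] by simp
    have FV: "Field V = D" unfolding V_def by (rule Field_card_of)
    define P where "P = {G :: ('m \<times> ('i \<Rightarrow> 'm)) set.
        (\<forall>d y y'. (d, y) \<in> G \<longrightarrow> (d, y') \<in> G \<longrightarrow> y = y') \<and> Domain G \<subseteq> D \<and>
        (\<forall>d\<in>Domain G. \<forall>d'. (d', d) \<in> V \<longrightarrow> d' \<in> Domain G) \<and>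
        (\<forall>n s t. incr_seq Ord (Domain G) n s \<longrightarrow> (\<forall>k<n. (s k, t k) \<in> G) \<longrightarrow>
           tp Rs ({..<n} \<times> UNIV) (\<lambda>(k, i). t k i) A = Phi Rs A r J f n)}"
    have chains: "\<Union>C \<in> P" if C: "C \<in> chains P" for C
    proof -
      have CP: "C \<subseteq> P" and ch: "\<forall>X\<in>C. \<forall>Y\<in>C. X \<subseteq> Y \<or> Y \<subseteq> X"
        using C unfolding chains_def chain_subset_def by auto
      have f1: "\<forall>d y y'. (d, y) \<in> \<Union>C \<longrightarrow> (d, y') \<in> \<Union>C \<longrightarrow> y = y'"
      proof (intro allI impI)
        fix d y y' assume "(d, y) \<in> \<Union>C" "(d, y') \<in> \<Union>C"
        then obtain G1 G2 where G: "G1 \<in> C" "G2 \<in> C" "(d, y) \<in> G1" "(d, y') \<in> G2" by auto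
        then have "(d, y) \<in> G1 \<and> (d, y') \<in> G1 \<or> (d, y) \<in> G2 \<and> (d, y') \<in> G2" using ch by blast
        then show "y = y'" using G CP unfolding P_def by blast
      qed
      have f2: "Domain (\<Union>C) \<subseteq> D" using CP unfolding P_def by blast
      have f3: "\<forall>d\<in>Domain (\<Union>C). \<forall>d'. (d', d) \<in> V \<longrightarrow> d' \<in> Domain (\<Union>C)"
      proof (intro ballI allI impI)
        fix d d' assume "d \<in> Domain (\<Union>C)" "(d', d) \<in> V"
        then obtain G where "G \<in> C" "d \<in> Domain G" by auto
        then have "d' \<in> Domain G" using CP \<open>(d', d) \<in> V\<close> unfolding P_def by blast
        then show "d' \<in> Domain (\<Union>C)" using \<open>G \<in> C\<close> by auto
      qed
      have f4: "tp Rs ({..<n} \<times> UNIV) (\<lambda>(k, i). t k i) A = Phi Rs A r J f n"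
        if s: "incr_seq Ord (Domain (\<Union>C)) n s" and st: "\<forall>k<n. (s k, t k) \<in> \<Union>C" for n s t
      proof (cases "n = 0")
        case True then show ?thesis unfolding Phi_def by (intro tp_empty_idx) simp
      next
        case False
        have fin: "finite ((\<lambda>k. (s k, t k)) ` {..<n})" by simp
        have sub: "(\<lambda>k. (s k, t k)) ` {..<n} \<subseteq> \<Union>C" using st by auto
        have ne: "C \<noteq> {}" using st False by auto
        have "subset.chain P C" using C by (simp add: chains_alt_def)
        then obtain G where G: "G \<in> C" "(\<lambda>k. (s k, t k)) ` {..<n} \<subseteq> G"
          using finite_subset_Union_chain[OF fin sub ne] by blast
        have stG: "\<forall>k<n. (s k, t k) \<in> G" using G(2) by auto
        then have "incr_seq Ord (Domain G) n s" using s unfolding incr_seq_def by blast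
        then show ?thesis using G(1) CP stG unfolding P_def by blast
      qed
      show ?thesis unfolding P_def using f1 f2 f3 f4 by blast
    qed
    obtain M where M: "M \<in> P" "\<forall>X\<in>P. M \<subseteq> X \<longrightarrow> X = M"
      using Zorn_Lemma[of P] chains by blast
    have Mfun: "\<forall>d y y'. (d, y) \<in> M \<longrightarrow> (d, y') \<in> M \<longrightarrow> y = y'" and MD: "Domain M \<subseteq> D"
      and Mdown: "\<forall>d\<in>Domain M. \<forall>d'. (d', d) \<in> V \<longrightarrow> d' \<in> Domain M"
      and Mrz: "\<forall>n s t. incr_seq Ord (Domain M) n s \<longrightarrow> (\<forall>k<n. (s k, t k) \<in> M) \<longrightarrow>
           tp Rs ({..<n} \<times> UNIV) (\<lambda>(k, i). t k i) A = Phi Rs A r J f n"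
      using M(1) unfolding P_def by blast+
    define b0 where "b0 d = (SOME y. (d, y) \<in> M)" for d
    have b0M: "(d, b0 d) \<in> M" if dM: "d \<in> Domain M" for d
    proof -
      obtain y where "(d, y) \<in> M" using dM by blast
      then show ?thesis unfolding b0_def by (rule someI[where P = "\<lambda>y. (d, y) \<in> M"])
    qed
    have Mb0: "y = b0 d" if "(d, y) \<in> M" for d y
      using Mfun b0M[of d] that by blast
    have rb0: "realz Rs A r J f Ord (Domain M) b0"
      unfolding realz_def
    proof (intro allI impI)
      fix n s assume s: "incr_seq Ord (Domain M) n s"
      then have "\<forall>k<n. (s k, b0 (s k)) \<in> M" using b0M unfolding incr_seq_def by blast
      then show "tp Rs ({..<n} \<times> UNIV) (\<lambda>(k, i). b0 (s k) i) A = Phi Rs A r J f n"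
        using Mrz[rule_format, of n s "\<lambda>k. b0 (s k)"] s by simp
    qed
    have DMD: "Domain M = D"
    proof (rule ccontr)
      assume "Domain M \<noteq> D"
      then obtain x where x: "x \<in> D - Domain M" using MD by blast
      have wf: "wf (V - Id)" using WV unfolding well_order_on_def by blast
      obtain w where w: "w \<in> D - Domain M" and wmin: "\<And>y. (y, w) \<in> V - Id \<Longrightarrow> y \<notin> D - Domain M"
        using wfE_min[OF wf x] by blast
      have linV: "linear_order_on D V" using WV unfolding well_order_on_def by blast
      have sub: "Domain M \<subseteq> underS V w"
      proof
        fix y assume y: "y \<in> Domain M"
        then have yw: "y \<noteq> w" "y \<in> D" using w MD by auto
        have "(y, w) \<in> V"
        proof (rule ccontr)
          assume "(y, w) \<notin> V"
          then have "(w, y) \<in> V" using lin_total[OF linV] yw w by blast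
          then have "w \<in> Domain M" using Mdown y by blast
          then show False using w by blast
        qed
        then show "y \<in> underS V w" using yw unfolding underS_def by blast
      qed
      have wF: "w \<in> Field V" using w FV by blast
      have "(card_of (underS V w), V) \<in> ordLess" using card_of_underS[OF _ wF] card_of_Card_order unfolding V_def by blast
      then have DMless: "Domain M <o D" using card_of_mono1[OF sub] ordLeq_ordLess_trans unfolding V_def by blast
      define U where "U = Domain M \<union> {w}"
      have "{w} <o D" using fin_ordLess_inf False by blast
      then have Uless: "U <o D" unfolding U_def using card_of_Un_ordLess_infinite False DMless by blast
      then have "U <=o Lam" using DL ordLess_imp_ordLeq ordLeq_transitive by blast
      then obtain c where c: "realz Rs A r J f Ord U c" using IH Uless by auto
      have cM: "realz Rs A r J f Ord (Domain M) c" using realz_mono[OF c] unfolding U_def by blast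
      have teq: "tp Rs (Domain M \<times> UNIV) (\<lambda>(d, i). c d i) A = tp Rs (Domain M \<times> UNIV) (\<lambda>(d, i). b0 d i) A"
        using realz_tp_eq[OF Ord cM rb0] .
      have DML: "Domain M <o Lam" using DMless DL ordLess_ordLeq_trans by blast
      have KL: "(Domain M \<times> (UNIV :: 'i set)) <o Lam" using my_Times_ordLess[OF infL DML Ism] .
      obtain g where g: "aut Sig Rs g" "\<forall>x\<in>A. g x = x"
        "\<forall>k\<in>Domain M \<times> UNIV. g ((\<lambda>(d, i). c d i) k) = (\<lambda>(d, i). b0 d i) k"
        using hom_A[OF hom infL KL Asm teq] by blast
      have gc: "g \<circ> c d = b0 d" if dM: "d \<in> Domain M" for d
      proof
        fix i show "(g \<circ> c d) i = b0 d i" using g(3) dM by auto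
      qed
      define M' where "M' = {(d, g \<circ> c d) | d. d \<in> U}"
      have DM': "Domain M' = U" unfolding M'_def by auto
      have rz': "realz Rs A r J f Ord U (\<lambda>d. g \<circ> c d)" using realz_aut[OF c g(1,2)] .
      have "M' \<in> P"
      proof -
        have p1: "\<forall>d y y'. (d, y) \<in> M' \<longrightarrow> (d, y') \<in> M' \<longrightarrow> y = y'" unfolding M'_def by blast
        have p2: "Domain M' \<subseteq> D" using DM' MD w unfolding U_def by blast
        have p3: "\<forall>d\<in>Domain M'. \<forall>d'. (d', d) \<in> V \<longrightarrow> d' \<in> Domain M'"
        proof (intro ballI allI impI)
          fix d d' assume d: "d \<in> Domain M'" and dd: "(d', d) \<in> V"
          show "d' \<in> Domain M'"
          proof (cases "d = w")
            case True
            show ?thesis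
            proof (cases "d' = w")
              case True then show ?thesis using DM' unfolding U_def by blast
            next
              case False
              then have "(d', w) \<in> V - Id" using dd \<open>d = w\<close> by blast
              then have "d' \<notin> D - Domain M" using wmin by blast
              moreover have "d' \<in> D" using dd FV unfolding Field_def by blast
              ultimately show ?thesis using DM' unfolding U_def by blast
            qed
          next
            case False
            then have "d \<in> Domain M" using d DM' unfolding U_def by blast
            then show ?thesis using Mdown dd DM' unfolding U_def by blast
          qed
        qed
        have p4: "\<forall>n s t. incr_seq Ord (Domain M') n s \<longrightarrow> (\<forall>k<n. (s k, t k) \<in> M') \<longrightarrow>
           tp Rs ({..<n} \<times> UNIV) (\<lambda>(k, i). t k i) A = Phi Rs A r J f n"
        proof (intro allI impI)
          fix n s t assume s: "incr_seq Ord (Domain M') n s" and st: "\<forall>k<n. (s k, t k) \<in> M'"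
          have tk: "t k = g \<circ> c (s k)" if "k < n" for k using st that unfolding M'_def by blast
          have "tp Rs ({..<n} \<times> UNIV) (\<lambda>(k, i). t k i) A = tp Rs ({..<n} \<times> UNIV) (\<lambda>(k, i). (g \<circ> c (s k)) i) A"
            by (rule tp_cong) (auto simp: tk)
          also have "\<dots> = Phi Rs A r J f n" using rz' s DM' unfolding realz_def by blast
          finally show "tp Rs ({..<n} \<times> UNIV) (\<lambda>(k, i). t k i) A = Phi Rs A r J f n" .
        qed
        show ?thesis unfolding P_def using p1 p2 p3 p4 by blast
      qed
      moreover have "M \<subseteq> M'"
      proof
        fix z assume z: "z \<in> M"
        obtain d y where dy: "z = (d, y)" by (cases z)
        then have "d \<in> Domain M" using z by blast
        moreover have "y = b0 d" using Mb0 z dy by blast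
        ultimately show "z \<in> M'" using gc dy unfolding M'_def U_def by auto
      qed
      ultimately have "M' = M" using M(2) by blast
      then show False using DM' w unfolding U_def by blast
    qed
    show ?thesis using rb0 DMD by auto
  qed
qed

lemma SE_D:
  assumes "E \<in> SE Sig Rs Lam A"
  shows "equiv UNIV E" "\<And>g x y. aut Sig Rs g \<Longrightarrow> \<forall>x\<in>A. g x = x \<Longrightarrow> (x, y) \<in> E \<longleftrightarrow> (g \<circ> x, g \<circ> y) \<in> E"
    "(UNIV // E) <o Lam"
  using assms unfolding SE_def by blast+

lemma indisc_pair_E:
  fixes f :: "nat \<Rightarrow> 'i \<Rightarrow> 'm"
  assumes hom: "strongly_hom Sig Rs Lam" and infL: "infinite Lam"
    and Asm: "A <o Lam" and Ism: "(UNIV :: 'i set) <o Lam"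
    and lin: "linear_order_on J r" and inf: "infinite J" and ind: "indisc Rs UNIV A r J f"
    and E: "E \<in> SE Sig Rs Lam A"
    and xy: "(x, y) \<in> r" "x \<noteq> y"
  shows "(f x, f y) \<in> E"
proof (rule ccontr)
  assume nE: "(f x, f y) \<notin> E"
  have eq: "equiv UNIV E" using SE_D(1)[OF E] .
  obtain Ord :: "('m \<times> 'm) set" where WO: "well_order_on UNIV Ord" using well_order_on by blast
  have Ord: "linear_order_on UNIV Ord" using WO unfolding well_order_on_def by blast
  have "Lam <=o Lam" by (rule card_of_mono1) simp
  then obtain b where b: "realz Rs A r J f Ord Lam b"
    using realz_all[OF hom infL Asm Ism Ord lin inf ind] by blast
  have xyJ: "x \<in> J" "y \<in> J" using xy lin unfolding linear_order_on_def partial_order_on_def preorder_on_def refl_on_def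
    by auto
  define t where "t k = (if k = 0 then x else y)" for k :: nat
  have t: "incr_seq r J 2 t" unfolding incr_seq_def t_def using xy xyJ by auto
  have Ft: "tp Rs ({..<2} \<times> UNIV) (\<lambda>(k, i). f (t k) i) A = Phi Rs A r J f 2"
    using phi_f[OF lin inf ind t] .
  have fin2: "{..<2::nat} <o Lam" using fin_ordLess_inf infL by blast
  have KL: "({..<2::nat} \<times> (UNIV :: 'i set)) <o Lam" using my_Times_ordLess[OF infL fin2 Ism] .
  have ne: "(b u, b v) \<notin> E" if uv: "u \<in> Lam" "v \<in> Lam" "(u, v) \<in> Ord" "u \<noteq> v" for u v
  proof -
    define s where "s k = (if k = 0 then u else v)" for k :: nat
    have s: "incr_seq Ord Lam 2 s" unfolding incr_seq_def s_def using uv by auto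
    have "tp Rs ({..<2} \<times> UNIV) (\<lambda>(k, i). b (s k) i) A = Phi Rs A r J f 2"
      using b s unfolding realz_def by blast
    then have "tp Rs ({..<2} \<times> UNIV) (\<lambda>(k, i). f (t k) i) A = tp Rs ({..<2} \<times> UNIV) (\<lambda>(k, i). b (s k) i) A"
      using Ft by simp
    then obtain g where g: "aut Sig Rs g" "\<forall>x\<in>A. g x = x"
      "\<forall>k\<in>{..<2} \<times> UNIV. g ((\<lambda>(k, i). f (t k) i) k) = (\<lambda>(k, i). b (s k) i) k"
      using hom_A[OF hom infL KL Asm] by blast
    have g0: "g \<circ> f x = b u"
    proof
      fix i :: 'i have "(0::nat, i) \<in> {..<2} \<times> UNIV" by simp
      from bspec[OF g(3) this] show "(g \<circ> f x) i = b u i" unfolding t_def s_def by simp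
    qed
    have g1: "g \<circ> f y = b v"
    proof
      fix i :: 'i have "(1::nat, i) \<in> {..<2} \<times> UNIV" by simp
      from bspec[OF g(3) this] show "(g \<circ> f y) i = b v i" unfolding t_def s_def by simp
    qed
    show ?thesis using SE_D(2)[OF E g(1,2), of "f x" "f y"] nE g0 g1 by simp
  qed
  have ne2: "(b u, b v) \<notin> E" if uv: "u \<in> Lam" "v \<in> Lam" "u \<noteq> v" for u v
  proof -
    have "(u, v) \<in> Ord \<or> (v, u) \<in> Ord" using lin_total[OF Ord] uv by blast
    then show ?thesis
    proof
      assume "(u, v) \<in> Ord" then show ?thesis using ne uv by blast
    next
      assume "(v, u) \<in> Ord" then have "(b v, b u) \<notin> E" using ne uv by blast
      then show ?thesis using eq unfolding equiv_def sym_def by blast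
    qed
  qed
  have "inj_on (\<lambda>u. E `` {b u}) Lam"
  proof (rule inj_onI)
    fix u v assume uv: "u \<in> Lam" "v \<in> Lam" "E `` {b u} = E `` {b v}"
    then have "(b u, b v) \<in> E" using eq_equiv_class_iff[OF eq] by blast
    then show "u = v" using ne2 uv by blast
  qed
  moreover have "(\<lambda>u. E `` {b u}) ` Lam \<subseteq> UNIV // E" unfolding quotient_def by blast
  ultimately have "Lam <=o (UNIV // E)" using card_of_ordLeq by blast
  then show False using SE_D(3)[OF E] not_ordLess_ordLeq by blast
qed

lemma indisc_E:
  fixes f :: "nat \<Rightarrow> 'i \<Rightarrow> 'm"
  assumes hom: "strongly_hom Sig Rs Lam" and infL: "infinite Lam"
    and Asm: "A <o Lam" and Ism: "(UNIV :: 'i set) <o Lam"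
    and lin: "linear_order_on J r" and inf: "infinite J" and ind: "indisc Rs UNIV A r J f"
    and E: "E \<in> SE Sig Rs Lam A"
    and xy: "x \<in> J" "y \<in> J"
  shows "(f x, f y) \<in> E"
proof -
  have eq: "equiv UNIV E" using SE_D(1)[OF E] .
  show ?thesis
  proof (cases "x = y")
    case True then show ?thesis using eq unfolding equiv_def refl_on_def by blast
  next
    case False
    then have "(x, y) \<in> r \<or> (y, x) \<in> r" using lin_total[OF lin xy] by blast
    then show ?thesis
    proof
      assume "(x, y) \<in> r" then show ?thesis using indisc_pair_E[OF assms(1-8)] False by blast
    next
      assume "(y, x) \<in> r" then have "(f y, f x) \<in> E" using indisc_pair_E[OF assms(1-8)] False by blast
      then show ?thesis using eq unfolding equiv_def sym_def by blast
    qed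
  qed
qed

definition stp :: "'m list set set \<Rightarrow> 'm set \<Rightarrow> ('i \<Rightarrow> 'm) \<Rightarrow> ('i \<Rightarrow> 'm) \<Rightarrow> bool" where
  "stp Rs A u v \<longleftrightarrow> (\<exists>(r :: (nat \<times> nat) set) (J :: nat set) (f :: nat \<Rightarrow> 'i \<Rightarrow> 'm).
               linear_order_on J r \<and> infinite J \<and> indisc Rs UNIV A r J f \<and>
               (\<exists>x\<in>J. f x = u) \<and> (\<exists>y\<in>J. f y = v))"

definition Ch :: "'m list set set \<Rightarrow> 'm set \<Rightarrow> ('i \<Rightarrow> 'm) \<Rightarrow> ('i \<Rightarrow> 'm) \<Rightarrow> bool" where
  "Ch Rs A u v \<longleftrightarrow> (\<exists>n (c :: nat \<Rightarrow> 'i \<Rightarrow> 'm). c 0 = u \<and> c n = v \<and> (\<forall>i<n. stp Rs A (c i) (c (Suc i))))"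

lemma stp_sym: "stp Rs A u v \<Longrightarrow> stp Rs A v u"
  unfolding stp_def by blast

lemma Ch_refl: "Ch Rs A u u"
  unfolding Ch_def by (rule exI[of _ 0]) auto

lemma Ch_sym:
  assumes "Ch Rs A u v" shows "Ch Rs A v u"
proof -
  obtain n c where c: "c 0 = u" "c n = v" "\<forall>i<n. stp Rs A (c i) (c (Suc i))" using assms unfolding Ch_def by blast
  define c' where "c' i = c (n - i)" for i
  have "\<forall>i<n. stp Rs A (c' i) (c' (Suc i))"
  proof (intro allI impI)
    fix i assume i: "i < n"
    then have "stp Rs A (c (n - Suc i)) (c (Suc (n - Suc i)))" using c(3) by simp
    moreover have "Suc (n - Suc i) = n - i" using i by simp
    ultimately show "stp Rs A (c' i) (c' (Suc i))" unfolding c'_def using stp_sym by simp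
  qed
  moreover have "c' 0 = v" "c' n = u" unfolding c'_def using c by auto
  ultimately show ?thesis unfolding Ch_def by blast
qed

lemma Ch_trans:
  assumes "Ch Rs A u v" "Ch Rs A v w" shows "Ch Rs A u w"
proof -
  obtain n1 c1 where c1: "c1 0 = u" "c1 n1 = v" "\<forall>i<n1. stp Rs A (c1 i) (c1 (Suc i))" using assms(1) unfolding Ch_def by blast
  obtain n2 c2 where c2: "c2 0 = v" "c2 n2 = w" "\<forall>i<n2. stp Rs A (c2 i) (c2 (Suc i))" using assms(2) unfolding Ch_def by blast
  define c where "c i = (if i \<le> n1 then c1 i else c2 (i - n1))" for i
  have "\<forall>i<n1 + n2. stp Rs A (c i) (c (Suc i))"
  proof (intro allI impI)
    fix i assume i: "i < n1 + n2"
    show "stp Rs A (c i) (c (Suc i))"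
    proof (cases "i < n1")
      case True then show ?thesis unfolding c_def using c1(3) by simp
    next
      case False
      then have "i - n1 < n2" "Suc i - n1 = Suc (i - n1)" using i by auto
      moreover have "c i = c2 (i - n1)" unfolding c_def using False c1(2) c2(1) by auto
      ultimately show ?thesis unfolding c_def using c2(3) False by auto
    qed
  qed
  moreover have "c 0 = u" "c (n1 + n2) = w" unfolding c_def using c1 c2 by auto
  ultimately show ?thesis unfolding Ch_def by blast
qed

lemma stp_tp:
  fixes u v :: "'i \<Rightarrow> 'm"
  assumes "stp Rs A u v" shows "tp Rs UNIV u A = tp Rs UNIV v A"
proof -
  obtain r J and f :: "nat \<Rightarrow> 'i \<Rightarrow> 'm" and x y where lin: "linear_order_on J r" and ind: "indisc Rs UNIV A r J f"
    and xy: "x \<in> J" "y \<in> J" "f x = u" "f y = v" using assms unfolding stp_def by blast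
  have "incr_seq r J 1 (\<lambda>_. x)" "incr_seq r J 1 (\<lambda>_. y)" unfolding incr_seq_def using xy by auto
  then have eq: "tp Rs ({..<1::nat} \<times> UNIV) (\<lambda>(k, i). f x i) A = tp Rs ({..<1::nat} \<times> UNIV) (\<lambda>(k, i). f y i) A"
    using ind[unfolded indisc_def, rule_format, of 1 "\<lambda>_. x" "\<lambda>_. y"] by (simp add: One_nat_def)
  define h where "h = (\<lambda>i::'i. (0::nat, i))"
  have img: "h ` UNIV = {..<1::nat} \<times> UNIV"
  proof
    show "h ` UNIV \<subseteq> {..<1::nat} \<times> UNIV" unfolding h_def by auto
    show "{..<1::nat} \<times> UNIV \<subseteq> h ` UNIV"
    proof
      fix z :: "nat \<times> 'i" assume "z \<in> {..<1::nat} \<times> UNIV"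
      then have "z = h (snd z)" unfolding h_def by (cases z) simp
      then show "z \<in> h ` UNIV" by blast
    qed
  qed
  have "tp Rs UNIV ((\<lambda>(k, i). f x i) \<circ> h) A = tp Rs UNIV ((\<lambda>(k, i). f y i) \<circ> h) A"
    apply (rule tp_compose) unfolding img by (rule eq)
  moreover have "(\<lambda>(k, i). f x i) \<circ> h = u" by (rule ext) (simp add: h_def xy(3)[symmetric])
  moreover have "(\<lambda>(k, i). f y i) \<circ> h = v" by (rule ext) (simp add: h_def xy(4)[symmetric])
  ultimately show ?thesis by simp
qed

lemma Ch_tp:
  fixes u v :: "'i \<Rightarrow> 'm"
  assumes "Ch Rs A u v" shows "tp Rs UNIV u A = tp Rs UNIV v A"
proof -
  obtain n c where c: "c 0 = u" "c n = v" "\<forall>i<n. stp Rs A (c i) (c (Suc i))" using assms unfolding Ch_def by blast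
  have "i \<le> n \<Longrightarrow> tp Rs UNIV (c i) A = tp Rs UNIV u A" for i
  proof (induction i)
    case 0 then show ?case using c by simp
  next
    case (Suc i)
    then have "stp Rs A (c i) (c (Suc i))" using c(3) by simp
    then have "tp Rs UNIV (c i) A = tp Rs UNIV (c (Suc i)) A" by (rule stp_tp)
    then show ?case using Suc by simp
  qed
  then have "tp Rs UNIV (c n) A = tp Rs UNIV u A" by blast
  then show ?thesis using c(2) by simp
qed

lemma stp_aut:
  fixes u v :: "'i \<Rightarrow> 'm"
  assumes "stp Rs A u v" "aut Sig Rs g" "\<forall>x\<in>A. g x = x"
  shows "stp Rs A (g \<circ> u) (g \<circ> v)"
proof -
  obtain r J and f :: "nat \<Rightarrow> 'i \<Rightarrow> 'm" and x y where lin: "linear_order_on J r" and inf: "infinite J" and ind: "indisc Rs UNIV A r J f"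
    and xy: "x \<in> J" "y \<in> J" "f x = u" "f y = v" using assms(1) unfolding stp_def by blast
  define f' where "f' j = g \<circ> f j" for j
  have "indisc Rs UNIV A r J f'"
    unfolding indisc_def
  proof (intro allI impI)
    fix n s t assume st: "incr_seq r J n s" "incr_seq r J n t"
    have e: "(\<lambda>(k, i). f' (q k) i) = g \<circ> (\<lambda>(k, i). f (q k) i)" for q unfolding f'_def by auto
    show "tp Rs ({..<n} \<times> UNIV) (\<lambda>(k, i). f' (s k) i) A = tp Rs ({..<n} \<times> UNIV) (\<lambda>(k, i). f' (t k) i) A"
      unfolding e tp_aut[OF assms(2,3)] using ind st unfolding indisc_def by blast
  qed
  moreover have "f' x = g \<circ> u" "f' y = g \<circ> v" unfolding f'_def using xy by auto
  ultimately show ?thesis unfolding stp_def using lin inf xy by blast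
qed

lemma Ch_aut:
  assumes "Ch Rs A u v" "aut Sig Rs g" "\<forall>x\<in>A. g x = x"
  shows "Ch Rs A (g \<circ> u) (g \<circ> v)"
proof -
  obtain n c where c: "c 0 = u" "c n = v" "\<forall>i<n. stp Rs A (c i) (c (Suc i))" using assms unfolding Ch_def by blast
  have "\<forall>i<n. stp Rs A (g \<circ> c i) (g \<circ> c (Suc i))" using stp_aut[OF _ assms(2,3)] c(3) by blast
  then show ?thesis unfolding Ch_def using c by (intro exI[of _ n] exI[of _ "\<lambda>i. g \<circ> c i"]) auto
qed

lemma aut_inv_fix:
  assumes "aut Sig Rs g" "\<forall>x\<in>A. g x = x" shows "\<forall>x\<in>A. inv g x = x"
  using assms aut_bij[OF assms(1)] by (metis bij_is_inj inv_f_f)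

lemma le_linear_order: "linear_order_on (UNIV :: nat set) {(m, n). m \<le> n}"
  unfolding linear_order_on_def partial_order_on_def preorder_on_def refl_on_def trans_def antisym_def total_on_def
  by auto

lemma Eprime_SE:
  fixes a :: "'i \<Rightarrow> 'm" and Lam Pi Pi' A :: "'m set"
  assumes hom: "strongly_hom Sig Rs Lam" and infL: "infinite Lam"
    and cP: "cond_P Rs Lam Pi Pi'"
    and Apm: "A <o Pi" and Ipm: "(UNIV :: 'i set) <o Pi"
  shows "{(x, y). (tp Rs UNIV x A \<noteq> tp Rs UNIV a A \<and> tp Rs UNIV y A \<noteq> tp Rs UNIV a A) \<or>
                 (tp Rs UNIV x A = tp Rs UNIV a A \<and> Ch Rs A x y)} \<in> SE Sig Rs Lam A"
    (is "?E \<in> _")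
proof -
  let ?T = "\<lambda>x :: 'i \<Rightarrow> 'm. tp Rs UNIV x A"
  let ?Ta = "?T a"
  note cPu = cP[unfolded cond_P_def]
  have infPi': "infinite Pi'" using conjunct1[OF conjunct2[OF cPu]] .
  have PP': "Pi <=o Pi'" using conjunct1[OF conjunct2[OF conjunct2[OF cPu]]] .
  have P'L: "Pi' <=o Lam" using conjunct1[OF conjunct2[OF conjunct2[OF conjunct2[OF cPu]]]] .
  note PP = conjunct2[OF conjunct2[OF conjunct2[OF conjunct2[OF cPu]]]]
  have PL: "Pi <=o Lam" using ordLeq_transitive[OF PP' P'L] .
  have AL: "A <o Lam" using ordLess_ordLeq_trans[OF Apm PL] .
  have IL: "(UNIV :: 'i set) <o Lam" using ordLess_ordLeq_trans[OF Ipm PL] .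
  have eqv: "equiv UNIV ?E"
  proof -
    have "refl_on UNIV ?E" unfolding refl_on_def using Ch_refl by blast
    moreover have "sym ?E"
    proof (rule symI)
      fix x y assume "(x, y) \<in> ?E"
      then show "(y, x) \<in> ?E" using Ch_sym Ch_tp by fastforce
    qed
    moreover have "trans ?E"
    proof (rule transI)
      fix x y z assume xy: "(x, y) \<in> ?E" and yz: "(y, z) \<in> ?E"
      show "(x, z) \<in> ?E"
      proof (cases "?T x = ?Ta")
        case True
        then have "Ch Rs A x y" using xy by blast
        moreover have "?T y = ?Ta" using True Ch_tp[OF \<open>Ch Rs A x y\<close>] by simp
        moreover then have "Ch Rs A y z" using yz by blast
        ultimately show ?thesis using True Ch_trans by blast
      next
        case False
        then have "?T y \<noteq> ?Ta" using xy by blast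
        then have "?T z \<noteq> ?Ta" using yz by blast
        then show ?thesis using False by blast
      qed
    qed
    ultimately show ?thesis unfolding equiv_def by blast
  qed
  have inv: "(x, y) \<in> ?E \<longleftrightarrow> (g \<circ> x, g \<circ> y) \<in> ?E" if g: "aut Sig Rs g" "\<forall>x\<in>A. g x = x" for g x y
  proof -
    have Tg: "?T (g \<circ> z) = ?T z" for z using tp_aut[OF g] .
    have "Ch Rs A x y \<longleftrightarrow> Ch Rs A (g \<circ> x) (g \<circ> y)"
    proof
      assume "Ch Rs A x y" then show "Ch Rs A (g \<circ> x) (g \<circ> y)" using Ch_aut[OF _ g] by blast
    next
      assume "Ch Rs A (g \<circ> x) (g \<circ> y)"
      then have "Ch Rs A (inv g \<circ> (g \<circ> x)) (inv g \<circ> (g \<circ> y))"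
        using Ch_aut[OF _ aut_inv[OF g(1)] aut_inv_fix[OF g]] by blast
      moreover have "inv g \<circ> g = id" using aut_bij[OF g(1)] by (simp add: bij_is_inj inv_o_cancel)
      ultimately show "Ch Rs A x y" by (simp add: o_assoc)
    qed
    then show ?thesis using Tg by auto
  qed
  have cls: "(UNIV // ?E) <o Lam"
  proof (rule ccontr)
    assume "\<not> (UNIV // ?E) <o Lam"
    then have "Lam <=o (UNIV // ?E)"
      using ordLess_or_ordLeq[OF card_of_Well_order card_of_Well_order] by blast
    then have P'E: "Pi' <=o (UNIV // ?E)" using ordLeq_transitive[OF P'L] by blast
    define Q where "Q = {?E `` {x} | x. ?T x = ?Ta}"
    define Nc where "Nc = {y. ?T y \<noteq> ?Ta}"
    have sub: "UNIV // ?E \<subseteq> insert Nc Q"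
    proof
      fix Z assume "Z \<in> UNIV // ?E"
      then obtain x where x: "Z = ?E `` {x}" by (auto elim: quotientE)
      show "Z \<in> insert Nc Q"
      proof (cases "?T x = ?Ta")
        case True then show ?thesis unfolding Q_def using x by blast
      next
        case False
        then have "?E `` {x} = Nc" unfolding Nc_def by auto
        then show ?thesis using x by blast
      qed
    qed
    have P'NQ: "Pi' <=o insert Nc Q" using ordLeq_transitive[OF P'E card_of_mono1[OF sub]] .
    have infQ: "infinite Q"
    proof
      assume "finite Q"
      then have "finite (insert Nc Q)" by simp
      then show False using card_of_ordLeq_finite[OF P'NQ] infPi' by blast
    qed
    obtain hh where "bij_betw hh Q (Q \<union> {Nc})" using infinite_imp_bij_betw2[OF infQ] by blast
    then have "(card_of Q, card_of (Q \<union> {Nc})) \<in> ordIso" using card_of_ordIso by blast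
    then have "(card_of (insert Nc Q), card_of Q) \<in> ordIso" using ordIso_symmetric by (simp add: insert_commute)
    then have "Pi' <=o Q" using ordLeq_ordIso_trans[OF P'NQ] by blast
    then obtain \<phi> where phi: "inj_on \<phi> Pi'" "\<phi> ` Pi' \<subseteq> Q" using card_of_ordLeq[of Pi' Q] by blast
    define X' where "X' j = (SOME x. ?T x = ?Ta \<and> \<phi> j = ?E `` {x})" for j
    have X': "?T (X' j) = ?Ta \<and> \<phi> j = ?E `` {X' j}" if "j \<in> Pi'" for j
    proof -
      have "\<exists>x. ?T x = ?Ta \<and> \<phi> j = ?E `` {x}" using phi(2) that unfolding Q_def by blast
      then show ?thesis unfolding X'_def by (rule someI_ex)
    qed
    have noCh: "\<not> Ch Rs A (X' j1) (X' j2)" if j: "j1 \<in> Pi'" "j2 \<in> Pi'" "j1 \<noteq> j2" for j1 j2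
    proof
      assume "Ch Rs A (X' j1) (X' j2)"
      then have "(X' j1, X' j2) \<in> ?E" using X'[OF j(1)] by simp
      then have "?E `` {X' j1} = ?E `` {X' j2}" by (rule eq_equiv_class_iff[OF eqv UNIV_I UNIV_I, THEN iffD2])
      then have "\<phi> j1 = \<phi> j2" using conjunct2[OF X'[OF j(1)]] conjunct2[OF X'[OF j(2)]] by simp
      then show False using phi(1) j unfolding inj_on_def by blast
    qed
    have "Pi <=o (UNIV :: 'm set)" by (rule card_of_mono1) simp
    then have "(UNIV :: 'i set) <=o (UNIV :: 'm set)" using ordLeq_transitive[OF ordLess_imp_ordLeq[OF Ipm]] by blast
    then obtain e :: "'i \<Rightarrow> 'm" where e: "inj e" using card_of_ordLeq[of "UNIV :: 'i set" "UNIV :: 'm set"] by blast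
    define I where "I = range e"
    have IPi: "I <o Pi" unfolding I_def using ordLeq_ordLess_trans[OF card_of_image Ipm] .
    obtain r :: "('m \<times> 'm) set" where wr: "well_order_on Pi' r" using well_order_on by blast
    then have Wr: "Well_order r" and Fr: "Field r = Pi'" using well_order_on_Well_order by blast+
    define X where "X j = X' j \<circ> inv e" for j
    define c0 where "c0 = a \<circ> inv e"
    have Xe: "X j \<circ> e = X' j" for j unfolding X_def using e by (auto simp: inv_f_f)
    have c0e: "c0 \<circ> e = a" unfolding c0_def using e by (auto simp: inv_f_f)
    have tpX: "\<forall>j\<in>Field r. tp Rs I (X j) A = tp Rs I c0 A"
    proof
      fix j assume "j \<in> Field r"
      then have "tp Rs UNIV (X j \<circ> e) A = tp Rs UNIV (c0 \<circ> e) A" using X' Fr Xe c0e by simp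
      then show "tp Rs I (X j) A = tp Rs I c0 A" unfolding I_def using tp_reindex[of e UNIV] e by blast
    qed
    have PF: "Pi' <=o Field r" using card_of_mono1[of Pi' "Field r"] Fr by simp
    then obtain b :: "nat \<Rightarrow> 'm \<Rightarrow> 'm" where bind: "indisc Rs I A {(m, n). m \<le> n} UNIV b"
      and bs: "\<forall>n. \<exists>s. incr_seq r (Field r) (Suc n) s \<and>
                    tp Rs ({..<Suc n} \<times> I) (\<lambda>(k, i). X (s k) i) A
                  = tp Rs ({..<Suc n} \<times> I) (\<lambda>(k, i). b k i) A"
      using PP[rule_format, where I=I and A=A and c=c0 and r=r and X=X, OF IPi Apm Wr PF tpX[rule_format]] by blast
    obtain s where s: "incr_seq r (Field r) 2 s"
      and stp2: "tp Rs ({..<2} \<times> I) (\<lambda>(k, i). X (s k) i) A = tp Rs ({..<2} \<times> I) (\<lambda>(k, i). b k i) A"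
      using bs[rule_format, of 1] by (auto simp: numeral_2_eq_2)
    define h where "h = (\<lambda>(k :: nat, i :: 'i). (k, e i))"
    have himg: "h ` ({..<n} \<times> UNIV) = {..<n} \<times> I" for n
    proof
      show "h ` ({..<n} \<times> UNIV) \<subseteq> {..<n} \<times> I" unfolding h_def I_def by auto
      show "{..<n} \<times> I \<subseteq> h ` ({..<n} \<times> UNIV)"
      proof
        fix z assume "z \<in> {..<n} \<times> I"
        then obtain k i where "z = (k, e i)" "k < n" unfolding I_def by auto
        then have "z = h (k, i)" "(k, i) \<in> {..<n} \<times> UNIV" unfolding h_def by auto
        then show "z \<in> h ` ({..<n} \<times> UNIV)" by blast
      qed
    qed
    define f' where "f' k = b k \<circ> e" for k
    have find: "indisc Rs UNIV A {(m, n). m \<le> n} UNIV f'"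
      unfolding indisc_def
    proof (intro allI impI)
      fix n :: nat and s t :: "nat \<Rightarrow> nat" assume st: "incr_seq {(m, n). m \<le> n} UNIV n s" "incr_seq {(m, n). m \<le> n} UNIV n t"
      have eq: "(\<lambda>(k, i). f' (q k) i) = (\<lambda>(k, m). b (q k) m) \<circ> h" for q
        unfolding f'_def h_def by (rule ext) (simp split: prod.split)
      have "tp Rs ({..<n} \<times> I) (\<lambda>(k, m). b (s k) m) A = tp Rs ({..<n} \<times> I) (\<lambda>(k, m). b (t k) m) A"
        using bind st unfolding indisc_def by blast
      then have "tp Rs (h ` ({..<n} \<times> UNIV)) (\<lambda>(k, m). b (s k) m) A = tp Rs (h ` ({..<n} \<times> UNIV)) (\<lambda>(k, m). b (t k) m) A"
        unfolding himg .
      then show "tp Rs ({..<n} \<times> UNIV) (\<lambda>(k, i). f' (s k) i) A = tp Rs ({..<n} \<times> UNIV) (\<lambda>(k, i). f' (t k) i) A"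
        unfolding eq by (rule tp_compose)
    qed
    have "stp Rs A (f' 0) (f' 1)" unfolding stp_def
      using le_linear_order find by blast
    then have Chf: "Ch Rs A (f' 0) (f' 1)" unfolding Ch_def
      by (intro exI[of _ 1] exI[of _ "\<lambda>i. if i = 0 then f' 0 else f' 1"]) auto
    have eqK: "tp Rs ({..<2} \<times> UNIV) ((\<lambda>(k, i). b k i) \<circ> h) A = tp Rs ({..<2} \<times> UNIV) ((\<lambda>(k, i). X (s k) i) \<circ> h) A"
      by (rule tp_compose) (unfold himg, rule stp2[symmetric])
    have fin2: "{..<2::nat} <o Lam" using fin_ordLess_inf infL by blast
    have KL: "({..<2::nat} \<times> (UNIV :: 'i set)) <o Lam" using my_Times_ordLess[OF infL fin2 IL] .
    obtain g where g: "aut Sig Rs g" "\<forall>x\<in>A. g x = x"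
      "\<forall>k\<in>{..<2} \<times> UNIV. g (((\<lambda>(k, i). b k i) \<circ> h) k) = ((\<lambda>(k, i). X (s k) i) \<circ> h) k"
      using hom_A[OF hom infL KL AL eqK] by blast
    have gf: "g \<circ> f' k = X' (s k)" if k: "k < 2" for k
    proof
      fix i :: 'i
      have "(k, i) \<in> {..<2} \<times> UNIV" using k by simp
      from bspec[OF g(3) this] have "g (b k (e i)) = X (s k) (e i)" unfolding h_def by simp
      moreover have "X (s k) (e i) = X' (s k) i" using Xe[of "s k"] by (metis comp_apply)
      ultimately show "(g \<circ> f' k) i = X' (s k) i" unfolding f'_def by simp
    qed
    have "Ch Rs A (g \<circ> f' 0) (g \<circ> f' 1)" using Ch_aut[OF Chf g(1,2)] .
    then have "Ch Rs A (X' (s 0)) (X' (s 1))" using gf[of 0] gf[of 1] by simp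
    moreover have "s 0 \<in> Pi'" "s 1 \<in> Pi'" "s 0 \<noteq> s 1" using s Fr unfolding incr_seq_def by auto
    ultimately show False using noCh by blast
  qed
  have inv2: "\<forall>g. aut Sig Rs g \<and> (\<forall>x\<in>A. g x = x) \<longrightarrow> (\<forall>x y. (x, y) \<in> ?E \<longleftrightarrow> (g \<circ> x, g \<circ> y) \<in> ?E)"
  proof (intro allI impI)
    fix g x y assume "aut Sig Rs g \<and> (\<forall>x\<in>A. g x = x)"
    then have gg: "aut Sig Rs g" "\<forall>x\<in>A. g x = x" by auto
    show "(x, y) \<in> ?E \<longleftrightarrow> (g \<circ> x, g \<circ> y) \<in> ?E" by (rule inv[OF gg])
  qed
  show ?thesis unfolding SE_def
    apply (rule CollectI)
    apply (intro conjI)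
      apply (rule eqv)
     apply (rule inv2)
    apply (rule cls)
    done
qed

theorem lemma3p4:
  fixes Sig Rs :: "'m list set set"
    and Lam Pi Pi' A :: "'m set"
    and a b :: "'i \<Rightarrow> 'm"
  assumes "logical_structure Sig Rs"
    and "infinite (UNIV :: 'm set)"
    and "infinite Lam"
    and "strongly_hom Sig Rs Lam"
    and "cond_P Rs Lam Pi Pi'"
    and "(A) <o (Pi)"
    and "(UNIV :: 'i set) <o (Pi)"
    and "large Rs Lam UNIV a A"
    and "large Rs Lam UNIV b A"
  shows "(\<exists>n (c :: nat \<Rightarrow> 'i \<Rightarrow> 'm). c 0 = a \<and> c n = b \<and>
            (\<forall>i<n. \<exists>(r :: (nat \<times> nat) set) (J :: nat set) (f :: nat \<Rightarrow> 'i \<Rightarrow> 'm).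
               linear_order_on J r \<and> infinite J \<and> indisc Rs UNIV A r J f \<and>
               (\<exists>x\<in>J. f x = c i) \<and> (\<exists>y\<in>J. f y = c (Suc i))))
         \<longleftrightarrow> lstp_eq Sig Rs Lam A a b"
proof -
  note hom = assms(4) and infL = assms(3) and cP = assms(5) and Apm = assms(6) and Ipm = assms(7)
  note cPu = cP[unfolded cond_P_def]
  have PP': "Pi <=o Pi'" using conjunct1[OF conjunct2[OF conjunct2[OF cPu]]] .
  have P'L: "Pi' <=o Lam" using conjunct1[OF conjunct2[OF conjunct2[OF conjunct2[OF cPu]]]] .
  have PL: "Pi <=o Lam" using ordLeq_transitive[OF PP' P'L] .
  have AL: "A <o Lam" using ordLess_ordLeq_trans[OF Apm PL] .
  have IL: "(UNIV :: 'i set) <o Lam" using ordLess_ordLeq_trans[OF Ipm PL] .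
  have LHS: "(\<exists>n (c :: nat \<Rightarrow> 'i \<Rightarrow> 'm). c 0 = a \<and> c n = b \<and>
            (\<forall>i<n. \<exists>(r :: (nat \<times> nat) set) (J :: nat set) (f :: nat \<Rightarrow> 'i \<Rightarrow> 'm).
               linear_order_on J r \<and> infinite J \<and> indisc Rs UNIV A r J f \<and>
               (\<exists>x\<in>J. f x = c i) \<and> (\<exists>y\<in>J. f y = c (Suc i)))) \<longleftrightarrow> Ch Rs A a b"
    unfolding Ch_def stp_def by (rule refl)
  show ?thesis unfolding LHS
  proof
    assume ch: "Ch Rs A a b"
    obtain n c where c: "c 0 = a" "c n = b" "\<forall>i<n. stp Rs A (c i) (c (Suc i))" using ch unfolding Ch_def by blast
    show "lstp_eq Sig Rs Lam A a b"
      unfolding lstp_eq_def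
    proof
      fix E :: "(('i \<Rightarrow> 'm) \<times> ('i \<Rightarrow> 'm)) set" assume E: "E \<in> SE Sig Rs Lam A"
      have eqv: "equiv UNIV E" using SE_D(1)[OF E] .
      have st: "(c i, c (Suc i)) \<in> E" if i: "i < n" for i
      proof -
        obtain r J and f :: "nat \<Rightarrow> 'i \<Rightarrow> 'm" and x y where lin: "linear_order_on J r" and inf: "infinite J"
          and ind: "indisc Rs UNIV A r J f" and xy: "x \<in> J" "y \<in> J" "f x = c i" "f y = c (Suc i)"
          using c(3) i unfolding stp_def by blast
        have "(f x, f y) \<in> E" using indisc_E[OF hom infL AL IL lin inf ind E xy(1,2)] .
        then show ?thesis using xy by simp
      qed
      have "i \<le> n \<Longrightarrow> (a, c i) \<in> E" for i
      proof (induction i)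
        case 0 then show ?case using c(1) eqv unfolding equiv_def refl_on_def by blast
      next
        case (Suc i)
        then have "(a, c i) \<in> E" "(c i, c (Suc i)) \<in> E" using st by auto
        then show ?case using eqv unfolding equiv_def trans_def by blast
      qed
      then show "(a, b) \<in> E" using c(2) by blast
    qed
  next
    assume ls: "lstp_eq Sig Rs Lam A a b"
    have "(a, b) \<in> {(x, y). (tp Rs UNIV x A \<noteq> tp Rs UNIV a A \<and> tp Rs UNIV y A \<noteq> tp Rs UNIV a A) \<or>
                 (tp Rs UNIV x A = tp Rs UNIV a A \<and> Ch Rs A x y)}"
      using ls Eprime_SE[OF hom infL cP Apm Ipm, of a] unfolding lstp_eq_def by (rule bspec)
    then show "Ch Rs A a b" by simp
  qed
qed


end
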